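(* Let $p$ be an odd prime, $e\ge1$, $s\in\mathbb{F}_p^*$, $a\in\mathbb{F}_p$ and $b\in\mathbb{F}_{p^e}$. Let $f\in\mathcal{RF}$ with $\varepsilon\in\{\pm1\}$ the sign of its Walsh transform and $f^*$ its dual. Let $N_s$ be the number of $x\in\mathbb{F}_{p^e}$ with $af(x)+\mathrm{Tr}_{p^e/p}(bx)=s$. If $e$ is even, then $N_s=0$ if $a=0,b=0$; $N_s=p^{e-1}$ if $a=0,b\ne0$; $N_s=p^{e-1}+\frac{\varepsilon(p-1)\sqrt{p^*}^e}{p}$ if $a\ne0$ and $f^*(-b/a)=a^{-1}s$; and $N_s=p^{e-1}-\frac{\varepsilon\sqrt{p^*}^e}{p}$ if $a\ne0$ and $f^*(-b/a)\ne a^{-1}s$. If $e$ is odd, then $N_s=0$ if $a=0,b=0$; $N_s=p^{e-1}$ if $a=0,b\ne0$, or if $a\ne0$ and $f^*(-b/a)=a^{-1}s$; $N_s=p^{e-1}+\frac{\varepsilon\sqrt{p^*}^eG(\eta_0,\lambda_1)}{p}$ if $a\ne0$, $f^*(-b/a)\ne a^{-1}s$ and $\eta_0(f^*(-b/a)-a^{-1}s)=1$; and $N_s=p^{e-1}-\frac{\varepsilon\sqrt{p^*}^eG(\eta_0,\lambda_1)}{p}$ if $a\ne0$, $f^*(-b/a)\ne a^{-1}s$ and $\eta_0(f^*(-b/a)-a^{-1}s)=-1$.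
   Context: $\zeta_p=e^{2\pi i/p}$; $\mathrm{Tr}_{p^e/p}$ is the trace map; $p^*=(-1)^{(p-1)/2}p$ with $\sqrt{p^*}=\sqrt p$ if $p\equiv1\pmod4$ and $\sqrt{-1}\sqrt p$ otherwise; $\eta_0$ is the quadratic character of $\mathbb{F}_p$, $\lambda_1(y)=\zeta_p^y$, and $G(\eta_0,\lambda_1)=\sum_{y\in\mathbb{F}_p^*}\eta_0(y)\zeta_p^y=\sqrt{-1}^{((p-1)/2)^2}\sqrt p$. A function $f:\mathbb{F}_{p^e}\to\mathbb{F}_p$ is weakly regular bent with sign $\varepsilon\in\{\pm1\}$ and dual $f^*:\mathbb{F}_{p^e}\to\mathbb{F}_p$ if $\sum_{x}\zeta_p^{f(x)-\mathrm{Tr}_{p^e/p}(\beta x)}=\varepsilon\sqrt{p^*}^e\zeta_p^{f^*(\beta)}$ for all $\beta\in\mathbb{F}_{p^e}$. $\mathcal{RF}$ is the set of weakly regular bent $f$ with $f(0)=0$ and $f(ax)=a^hf(x)$ for all $a\in\mathbb{F}_p^*$, $x\in\mathbb{F}_{p^e}$, for some positive even integer $h$ with $\gcd(h-1,p-1)=1$. *)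

theory Defs
  imports "HOL-Number_Theory.Number_Theory" "HOL-Analysis.Analysis"
begin

text \<open>F_{p^e} is a finite field type 'a with CARD('a) = p^e.
  F_p is identified with the prime subfield of 'a, i.e. the image of the integers.
  Functions into F_p are functions 'a => 'a with values in the prime subfield.\<close>

definition prime_subfield :: "'a::field set" where
  "prime_subfield = range (of_int :: int \<Rightarrow> 'a)"

definition tr :: "nat \<Rightarrow> nat \<Rightarrow> 'a::field \<Rightarrow> 'a" where
  "tr p e x = (\<Sum>i<e. x ^ (p ^ i))"

definition fp_idx :: "nat \<Rightarrow> 'a::field \<Rightarrow> nat" where
  "fp_idx p y = (THE k. k < p \<and> of_nat k = y)"

definition zeta_pow :: "nat \<Rightarrow> 'a::field \<Rightarrow> complex" where
  "zeta_pow p y = exp (2 * pi * \<i> * of_nat (fp_idx p y) / of_nat p)"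

definition eta0 :: "nat \<Rightarrow> 'a::field \<Rightarrow> int" where
  "eta0 p y = Legendre (int (fp_idx p y)) (int p)"

definition sqrt_pstar :: "nat \<Rightarrow> complex" where
  "sqrt_pstar p = (if p mod 4 = 1 then complex_of_real (sqrt (real p))
                   else \<i> * complex_of_real (sqrt (real p)))"

definition gauss_sum :: "nat \<Rightarrow> 'a::field itself \<Rightarrow> complex" where
  "gauss_sum p T = (\<Sum>y\<in>prime_subfield - {0::'a}. of_int (eta0 p y) * zeta_pow p y)"

definition weakly_regular_bent ::
  "nat \<Rightarrow> nat \<Rightarrow> ('a::{field,finite} \<Rightarrow> 'a) \<Rightarrow> int \<Rightarrow> ('a \<Rightarrow> 'a) \<Rightarrow> bool" where
  "weakly_regular_bent p e f eps fstar \<longleftrightarrow>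
     eps \<in> {1, -1} \<and> (\<forall>x. f x \<in> prime_subfield) \<and> (\<forall>x. fstar x \<in> prime_subfield) \<and>
     (\<forall>\<beta>. (\<Sum>x\<in>UNIV. zeta_pow p (f x - tr p e (\<beta> * x)))
            = of_int eps * sqrt_pstar p ^ e * zeta_pow p (fstar \<beta>))"

definition in_RF ::
  "nat \<Rightarrow> nat \<Rightarrow> ('a::{field,finite} \<Rightarrow> 'a) \<Rightarrow> int \<Rightarrow> ('a \<Rightarrow> 'a) \<Rightarrow> bool" where
  "in_RF p e f eps fstar \<longleftrightarrow>
     weakly_regular_bent p e f eps fstar \<and> f 0 = 0 \<and>
     (\<exists>h::nat. h > 0 \<and> even h \<and> gcd (h - 1) (p - 1) = 1 \<and>
        (\<forall>a\<in>prime_subfield - {0}. \<forall>x. f (a * x) = a ^ h * f x))"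

definition num_sol :: "nat \<Rightarrow> nat \<Rightarrow> ('a::{field,finite} \<Rightarrow> 'a) \<Rightarrow> 'a \<Rightarrow> 'a \<Rightarrow> 'a \<Rightarrow> nat" where
  "num_sol p e f a b s = card {x. a * f x + tr p e (b * x) = s}"

end

theory Submission
  imports Defs "HOL-Computational_Algebra.Polynomial_Factorial"
begin


hide_const (open) up_ring.coeff up_ring.monom module.smult

lemma pcompose_power: "pcompose (q ^ n) r = (pcompose q r) ^ n"
  by (induction n) (simp_all add: pcompose_mult pcompose_1)

definition cyc :: "nat \<Rightarrow> int poly" where "cyc p = (\<Sum>k<p. monom 1 k)"

lemma coeff_cyc: "coeff (cyc p) n = (if n < p then 1 else 0)"
  by (simp add: cyc_def coeff_sum)

lemma degree_cyc: assumes "p > 0" shows "degree (cyc p) = p - 1"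
proof (rule antisym)
  show "degree (cyc p) \<le> p - 1" by (rule degree_le) (auto simp: coeff_cyc)
  show "p - 1 \<le> degree (cyc p)" by (rule le_degree) (use assms in \<open>simp add: coeff_cyc\<close>)
qed

lemma cyc_mult: assumes "p > 0" shows "cyc p * [:-1, 1:] = monom 1 p - 1"
proof (rule poly_eqI)
  fix n
  have "cyc p * [:-1, 1:] = smult (-1) (cyc p) + pCons 0 (cyc p)"
    by (simp add: mult_pCons_right)
  then show "coeff (cyc p * [:-1, 1:]) n = coeff (monom 1 p - 1) n"
    using assms by (cases n) (auto simp: coeff_cyc coeff_pCons coeff_1)
qed

lemma cyc_shift_times_x: assumes "p > 0"
  shows "pcompose (cyc p) [:1, 1:] * [:0, 1:] = [:1, 1:] ^ p - 1"
proof -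
  have h2: "pcompose [:-1, 1::int:] [:1, 1:] = [:0, 1:]"
    by (simp add: pcompose_pCons)
  have h3: "pcompose (monom 1 p - 1) [:1, 1::int:] = [:1, 1:] ^ p - 1"
    by (simp add: pcompose_diff pcompose_1 monom_altdef pcompose_power pcompose_pCons)
  have "pcompose (cyc p) [:1, 1:] * [:0, 1:] = pcompose (cyc p * [:-1, 1:]) [:1, 1:]"
    by (simp only: pcompose_mult h2)
  also have "\<dots> = [:1, 1:] ^ p - 1" by (simp only: cyc_mult[OF assms] h3)
  finally show ?thesis .
qed

lemma coeff_cyc_shift: assumes "p > 0"
  shows "coeff (pcompose (cyc p) [:1, 1:]) k = int (p choose (k + 1))"
proof -
  have "coeff (pcompose (cyc p) [:1, 1:]) k = coeff (pcompose (cyc p) [:1, 1:] * [:0, 1:]) (Suc k)"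
    by (simp add: mult_pCons_right coeff_pCons)
  also have "\<dots> = coeff ([:1, 1:] ^ p - 1) (Suc k)" by (simp only: cyc_shift_times_x[OF assms])
  also have "\<dots> = coeff ([:1, 1:] ^ p) (Suc k)" by (simp add: coeff_1)
  also have "\<dots> = int (p choose (k+1))"
  proof (cases "Suc k \<le> p")
    case True then show ?thesis by (simp add: coeff_linear_poly_power)
  next
    case False
    have "degree ([:1, 1::int:] ^ p) = p" by (simp add: degree_linear_power)
    then show ?thesis using False by (simp add: coeff_eq_0 binomial_eq_0)
  qed
  finally show ?thesis by simp
qed

lemma eis_aux:
  fixes a b g :: "int poly" and q :: int
  assumes q: "prime q" and g: "g = a * b" and a0: "q dvd coeff a 0" and b0: "\<not> q dvd coeff b 0"
    and gk: "\<forall>k<degree g. q dvd coeff g k" and lc: "lead_coeff g = 1"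
  shows "degree b = 0"
proof -
  have an: "a \<noteq> 0" and bn: "b \<noteq> 0" using lc g by auto
  have "lead_coeff a * lead_coeff b = 1" using lc g by (simp add: lead_coeff_mult)
  hence nla: "\<not> q dvd lead_coeff a" using q
    by (metis dvd_mult2 not_prime_unit)
  define r where "r = (LEAST r. \<not> q dvd coeff a r)"
  have r1: "\<not> q dvd coeff a r" unfolding r_def by (rule LeastI[of _ "degree a"]) (rule nla)
  have r2: "r \<le> degree a" unfolding r_def by (rule Least_le) (rule nla)
  have r3: "\<forall>i<r. q dvd coeff a i" unfolding r_def using not_less_Least by blast
  have "coeff g r = (\<Sum>i\<le>r. coeff a i * coeff b (r-i))" by (simp add: g coeff_mult)
  also have "\<dots> = (\<Sum>i<r. coeff a i * coeff b (r-i)) + coeff a r * coeff b 0"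
    by (simp add: lessThan_Suc_atMost[symmetric])
  finally have eq: "coeff g r = (\<Sum>i<r. coeff a i * coeff b (r-i)) + coeff a r * coeff b 0" .
  have d1: "q dvd (\<Sum>i<r. coeff a i * coeff b (r-i))"
    by (rule dvd_sum) (use r3 in auto)
  have d2: "\<not> q dvd coeff a r * coeff b 0" using q r1 b0 by (simp add: prime_dvd_mult_iff)
  have "\<not> q dvd coeff g r"
  proof
    assume "q dvd coeff g r"
    with eq d1 have "q dvd coeff a r * coeff b 0" by (simp add: dvd_add_right_iff)
    with d2 show False by blast
  qed
  hence "r \<ge> degree g" using gk by (meson not_less)
  with r2 have "degree a \<ge> degree g" by simp
  moreover have "degree g = degree a + degree b" using g an bn by (simp add: degree_mult_eq)
  ultimately show ?thesis by simp
qed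

lemma lead_coeff_cyc: assumes "p > 0" shows "lead_coeff (cyc p) = 1"
  using assms by (simp add: degree_cyc coeff_cyc)

lemma cyc_factor_unit:
  assumes "p > 0" "cyc p = a * b" "degree b = 0"
  shows "is_unit b"
proof -
  obtain c where c: "b = [:c:]" using assms(3) by (metis degree_eq_zeroE)
  have "lead_coeff a * lead_coeff b = 1" using lead_coeff_cyc[OF assms(1)] assms(2)
    by (simp add: lead_coeff_mult)
  hence "lead_coeff a * c = 1" using c by simp
  hence "c dvd 1" by (metis dvd_triv_right)
  thus ?thesis using c by (simp add: is_unit_poly_iff)
qed

lemma cyc_irreducible: assumes "prime p" shows "irreducible (cyc p)"
proof (rule irreducibleI)
  have p0: "p > 0" and p2: "p \<ge> 2" using assms prime_gt_0_nat prime_ge_2_nat by auto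
  show "cyc p \<noteq> 0" using lead_coeff_cyc[OF p0] by auto
  show "\<not> is_unit (cyc p)"
  proof
    assume "is_unit (cyc p)"
    then obtain c where "cyc p = [:c:]" by (auto simp: is_unit_poly_iff)
    hence "degree (cyc p) = 0" by simp
    with degree_cyc[OF p0] p2 show False by simp
  qed
  fix a b assume ab: "cyc p = a * b"
  define g where "g = pcompose (cyc p) [:1, 1:]"
  define a' where "a' = pcompose a [:1, 1:]"
  define b' where "b' = pcompose b [:1, 1:]"
  have g: "g = a' * b'" by (simp add: g_def a'_def b'_def ab pcompose_mult)
  have dg: "degree g = p - 1" by (simp add: g_def degree_pcompose degree_cyc[OF p0])
  have cg: "coeff g k = int (p choose (k+1))" for k by (simp add: g_def coeff_cyc_shift[OF p0])
  have lc: "lead_coeff g = 1" using p0 by (simp add: dg cg)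
  have gk: "\<forall>k<degree g. int p dvd coeff g k"
  proof (intro allI impI)
    fix k assume "k < degree g"
    hence "p dvd (p choose (k+1))" using dg p0 by (intro dvd_choose_prime assms) auto
    thus "int p dvd coeff g k" by (simp add: cg)
  qed
  have pint: "prime (int p)" using assms by simp
  have g0: "coeff a' 0 * coeff b' 0 = int p" using cg[of 0] g by (simp add: coeff_mult)
  have notboth: "\<not> (int p dvd coeff a' 0 \<and> int p dvd coeff b' 0)"
  proof
    assume "int p dvd coeff a' 0 \<and> int p dvd coeff b' 0"
    hence "int p * int p dvd int p" using g0 by (metis mult_dvd_mono)
    hence "int p dvd 1" using p0 by simp
    thus False using pint not_prime_unit by blast
  qed
  have "int p dvd coeff a' 0 \<or> int p dvd coeff b' 0" using g0 pint
    by (metis dvd_refl prime_dvd_mult_iff)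
  thus "is_unit a \<or> is_unit b"
  proof
    assume h: "int p dvd coeff a' 0"
    hence "\<not> int p dvd coeff b' 0" using notboth by blast
    hence "degree b' = 0" using eis_aux[OF pint g h _ gk lc] by blast
    hence "degree b = 0" by (simp add: b'_def degree_pcompose)
    thus ?thesis using cyc_factor_unit[OF p0 ab] by blast
  next
    assume h: "int p dvd coeff b' 0"
    hence "\<not> int p dvd coeff a' 0" using notboth by blast
    moreover have g': "g = b' * a'" using g by (simp add: mult.commute)
    ultimately have "degree a' = 0" using eis_aux[OF pint g' h _ gk lc] by blast
    hence "degree a = 0" by (simp add: a'_def degree_pcompose)
    thus ?thesis using cyc_factor_unit[OF p0, of b a] ab by (simp add: mult.commute)
  qed
qed

lemma map_poly_of_int_mult:
  "map_poly (of_int :: int \<Rightarrow> 'a::comm_ring_1) (P * Q) = map_poly of_int P * map_poly of_int Q"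
  by (intro poly_eqI) (simp add: coeff_map_poly coeff_mult)

lemma map_poly_of_int_add:
  "map_poly (of_int :: int \<Rightarrow> 'a::comm_ring_1) (P + Q) = map_poly of_int P + map_poly of_int Q"
  by (intro poly_eqI) (simp add: coeff_map_poly)

lemma map_poly_of_int_const:
  "map_poly (of_int :: int \<Rightarrow> 'a::comm_ring_1) [:c:] = [:of_int c:]"
  by (intro poly_eqI) (simp add: coeff_map_poly coeff_pCons split: nat.splits)

lemma map_poly_of_int_sum:
  "map_poly (of_int :: int \<Rightarrow> 'a::comm_ring_1) (sum f A) = (\<Sum>k\<in>A. map_poly of_int (f k))"
  by (intro poly_eqI) (simp add: coeff_map_poly coeff_sum)

lemma map_poly_of_int_diff:
  "map_poly (of_int :: int \<Rightarrow> 'a::comm_ring_1) (P - Q) = map_poly of_int P - map_poly of_int Q"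
  by (intro poly_eqI) (simp add: coeff_map_poly)

lemma map_poly_of_int_smult:
  "map_poly (of_int :: int \<Rightarrow> 'a::comm_ring_1) (smult c P) = smult (of_int c) (map_poly of_int P)"
  by (intro poly_eqI) (simp add: coeff_map_poly)

lemma min_root_poly_dvd:
  fixes B P :: "int poly" and z :: complex
  assumes Bz: "poly (map_poly of_int B) z = 0" and B0: "B \<noteq> 0"
    and Bmin: "\<And>R. R \<noteq> 0 \<Longrightarrow> poly (map_poly of_int R) z = 0 \<Longrightarrow> degree B \<le> degree R"
    and Pz: "poly (map_poly of_int P) z = 0"
  shows "fract_poly B dvd fract_poly P"
proof -
  obtain Q R where qr: "pseudo_divmod P B = (Q, R)" by (cases "pseudo_divmod P B") auto
  define c where "c = lead_coeff B ^ (Suc (degree P) - degree B)"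
  have c0: "c \<noteq> 0" using B0 by (simp add: c_def)
  have eq: "smult c P = B * Q + R" using pseudo_divmod(1)[OF B0 qr] by (simp add: c_def)
  have Rdeg: "R = 0 \<or> degree R < degree B" using pseudo_divmod(2)[OF B0 qr] .
  have "R = smult c P - B * Q" using eq by simp
  hence "poly (map_poly of_int R) z = 0"
    by (simp add: map_poly_of_int_diff map_poly_of_int_smult map_poly_of_int_mult Pz Bz)
  hence "R = 0" using Rdeg Bmin by force
  hence "smult c P = B * Q" using eq by simp
  hence "smult (to_fract c) (fract_poly P) = fract_poly B * fract_poly Q"
    by (metis fract_poly_mult fract_poly_smult)
  hence "fract_poly P = fract_poly B * smult (inverse (to_fract c)) (fract_poly Q)"
    using c0 by (metis (no_types, lifting) mult_smult_right smult_smult left_inverse smult_1_left to_fract_eq_0_iff)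
  thus ?thesis by (rule dvdI)
qed

lemma cyc_root_degree:
  fixes A :: "int poly" and z :: complex
  assumes p: "prime p" and A0: "A \<noteq> 0" and Az: "poly (map_poly of_int A) z = 0"
    and Cz: "poly (map_poly of_int (cyc p)) z = 0"
  shows "degree A \<ge> p - 1"
proof -
  have p0: "p > 0" and p2: "p \<ge> 2" using p prime_gt_0_nat prime_ge_2_nat by auto
  have dC: "degree (cyc p) \<noteq> 0" using degree_cyc[OF p0] p2 by simp
  have "content (cyc p) dvd 1" using content_dvd_coeff[of "cyc p" 0] p0 by (simp add: coeff_cyc)
  hence cont: "content (cyc p) = 1" using is_unit_content_iff by blast
  have irr: "irreducible (fract_poly (cyc p))"
    using nonconst_poly_irreducible_iff[OF dC] cyc_irreducible[OF p] by blast
  let ?P = "\<lambda>R :: int poly. R \<noteq> 0 \<and> poly (map_poly of_int R) z = 0"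
  obtain B where B: "?P B" and Bmin: "\<And>R. ?P R \<Longrightarrow> degree B \<le> degree R"
    using ex_has_least_nat[of ?P A degree] A0 Az by blast
  have dvdC: "fract_poly B dvd fract_poly (cyc p)"
    by (rule min_root_poly_dvd[OF _ _ _ Cz]) (use B Bmin in auto)
  then obtain w where w: "fract_poly (cyc p) = fract_poly B * w" by (elim dvdE)
  from irreducibleD[OF irr w] have "is_unit (fract_poly B) \<or> is_unit w" .
  thus ?thesis
  proof
    assume "is_unit (fract_poly B)"
    then obtain c where c: "fract_poly B = [:c:]" by (auto simp: is_unit_poly_iff)
    hence "degree B = 0" by (metis degree_map_poly degree_pCons_0 to_fract_eq_0_iff)
    then obtain d where d: "B = [:d:]" by (metis degree_eq_zeroE)
    hence "d \<noteq> 0" using B by auto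
    moreover have "poly (map_poly of_int B) z = of_int d" by (simp add: d map_poly_of_int_const)
    ultimately show ?thesis using B by simp
  next
    assume "is_unit w"
    hence "fract_poly (cyc p) dvd fract_poly B" using w
      by (metis dvd_mult_unit_iff dvd_refl)
    hence "cyc p dvd B" using cont by (rule fract_poly_dvdD)
    hence "degree (cyc p) \<le> degree B" using B by (intro dvd_imp_degree_le) auto
    also have "degree B \<le> degree A" using Bmin A0 Az by blast
    finally show ?thesis using degree_cyc[OF p0] by simp
  qed
qed


lemma lin_indep:
  fixes z :: complex and m :: "nat \<Rightarrow> int"
  assumes p: "prime p" and zp: "z ^ p = 1" and z1: "z \<noteq> 1"
    and sm: "(\<Sum>k<p. of_int (m k) * z ^ k) = 0"
  shows "\<forall>k<p. m k = m 0"
proof -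
  have p0: "p > 0" and p2: "p \<ge> 2" using p prime_gt_0_nat prime_ge_2_nat by auto
  have geo: "(\<Sum>k<p. z ^ k) = 0"
    using z1 zp by (simp add: sum_gp_strict)
  have Cz: "poly (map_poly of_int (cyc p)) z = 0"
    by (simp add: cyc_def poly_sum map_poly_of_int_sum map_poly_monom poly_monom geo)
  define A where "A = (\<Sum>k<p. monom (m k - m (p - 1)) k)"
  have cA: "coeff A n = (if n < p then m n - m (p - 1) else 0)" for n
    by (simp add: A_def coeff_sum)
  have "poly (map_poly of_int A) z = (\<Sum>k<p. of_int (m k - m (p - 1)) * z ^ k)"
    by (simp add: A_def poly_sum map_poly_of_int_sum map_poly_monom poly_monom)
  also have "\<dots> = (\<Sum>k<p. of_int (m k) * z ^ k) - of_int (m (p - 1)) * (\<Sum>k<p. z ^ k)"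
    by (simp add: sum_subtractf sum_distrib_left left_diff_distrib mult.assoc)
  also have "\<dots> = 0" using sm geo by simp
  finally have Az: "poly (map_poly of_int A) z = 0" .
  have "degree A \<le> p - 2"
  proof (rule degree_le, intro allI impI)
    fix i assume "p - 2 < i"
    hence "i = p - 1 \<or> i \<ge> p" by linarith
    thus "coeff A i = 0" using p2 cA[of i] by auto
  qed
  have A0: "A = 0"
  proof (rule ccontr)
    assume "A \<noteq> 0"
    hence "degree A \<ge> p - 1" by (rule cyc_root_degree[OF p _ Az Cz])
    with \<open>degree A \<le> p - 2\<close> p2 show False by linarith
  qed
  have "\<forall>k<p. m k = m (p - 1)"
  proof (intro allI impI)
    fix k assume "k < p"
    hence "coeff A k = m k - m (p - 1)" by (simp add: cA)
    thus "m k = m (p - 1)" using A0 by simp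
  qed
  thus ?thesis using p0 by (metis)
qed



locale ffp =
  fixes p e :: nat and ty :: "'a::{field,finite} itself"
  assumes p: "prime p" and e: "e \<ge> 1" and card: "CARD('a) = p ^ e"
begin

lemma p_gt1: "p > 1" using p prime_gt_1_nat by blast

lemma char_eq: "CHAR('a) = p"
proof -
  have fin: "finite (UNIV :: 'a set)" by simp
  have pc: "prime CHAR('a)" by (rule prime_CHAR_semidom[OF finite_imp_CHAR_pos[OF fin]])
  have "CHAR('a) dvd p ^ e" using CHAR_dvd_CARD[where ?'a='a] card by simp
  hence "CHAR('a) dvd p" using pc prime_dvd_power by blast
  thus ?thesis using pc p primes_dvd_imp_eq by blast
qed

lemma of_nat_eq_iff: "(of_nat a :: 'a) = of_nat b \<longleftrightarrow> a mod p = b mod p"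
proof -
  have "(of_nat a :: 'a) = of_nat b \<longleftrightarrow> [a = b] (mod CHAR('a))" by (rule of_nat_eq_iff_cong_CHAR)
  thus ?thesis by (simp add: char_eq Cong.cong_def)
qed

lemma of_int_eq_iff: "(of_int a :: 'a) = of_int b \<longleftrightarrow> a mod int p = b mod int p"
proof -
  have "(of_int a :: 'a) = of_int b \<longleftrightarrow> [a = b] (mod int CHAR('a))" by (rule of_int_eq_iff_cong_CHAR)
  thus ?thesis by (simp add: char_eq Cong.cong_def)
qed

lemma of_nat_p: "(of_nat p :: 'a) = 0"
  using of_nat_eq_iff[of p 0] by simp

lemma frob: "((x::'a) + y) ^ p = x ^ p + y ^ p"
  using freshmans_dream[where ?'a='a] char_eq p by simp

lemma frob_pow: "((x::'a) + y) ^ (p ^ i) = x ^ (p ^ i) + y ^ (p ^ i)"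
  using freshmans_dream'[where ?'a='a] char_eq p by simp

lemma frob_sum: "(sum (f :: 'b \<Rightarrow> 'a) A) ^ p = (\<Sum>i\<in>A. f i ^ p)"
  using freshmans_dream_sum[where ?'a='a] char_eq p by simp

lemma frob_minus: "(- (x::'a)) ^ p = - (x ^ p)"
  using minus_power_prime_CHAR[where ?'a='a] char_eq p by simp

lemma pow_card: "(x::'a) ^ (p ^ e) = x"
proof (cases "x = 0")
  case False
  have c0: "card (UNIV :: 'a set) > 0" by simp
  have "x * (\<Prod>y\<in>UNIV-{0}. x * y) = x * x ^ (card (UNIV :: 'a set) - 1) * \<Prod>(UNIV-{0})"
    by (simp add: prod.distrib mult_ac)
  also have "x * x ^ (card (UNIV :: 'a set) - 1) = x ^ Suc (card (UNIV :: 'a set) - 1)"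
    by (subst power_Suc) auto
  also have "Suc (card (UNIV :: 'a set) - 1) = card (UNIV :: 'a set)"
    using c0 by simp
  also have "(\<Prod>y\<in>UNIV-{0}. x * y) = (\<Prod>y\<in>UNIV-{0}. y)"
    by (rule prod.reindex_bij_witness[of _ "\<lambda>y. y / x" "\<lambda>y. x * y"]) (use False in auto)
  finally show ?thesis using card by simp
next
  case True
  then show ?thesis using p_gt1 by simp
qed

lemma of_nat_pow_p: "(of_nat k :: 'a) ^ p = of_nat k"
proof (induction k)
  case 0 then show ?case using p_gt1 by simp
next
  case (Suc k)
  have "(of_nat (Suc k) :: 'a) ^ p = (of_nat k + 1) ^ p" by (simp add: add.commute)
  also have "\<dots> = of_nat k ^ p + 1" by (simp add: frob)
  finally show ?case using Suc by simp
qed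

lemma P_eq: "(prime_subfield :: 'a set) = of_nat ` {..<p}"
proof
  show "(prime_subfield :: 'a set) \<subseteq> of_nat ` {..<p}"
  proof
    fix y :: 'a assume "y \<in> prime_subfield"
    then obtain k where k: "y = of_int k" by (auto simp: prime_subfield_def)
    have "y = of_int (int (nat (k mod int p)))"
      using k p_gt1 by (simp add: of_int_eq_iff)
    also have "\<dots> = of_nat (nat (k mod int p))" by simp
    finally show "y \<in> of_nat ` {..<p}" using p_gt1
      by (intro image_eqI[of _ _ "nat (k mod int p)"]) (auto simp: nat_less_iff)
  qed
  show "of_nat ` {..<p} \<subseteq> (prime_subfield :: 'a set)"
    by (auto simp: prime_subfield_def intro!: image_eqI[of _ _ "int k" for k])
qed

lemma inj_of_nat: "inj_on (of_nat :: nat \<Rightarrow> 'a) {..<p}"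
  by (rule inj_onI) (simp add: of_nat_eq_iff)

lemma card_P: "card (prime_subfield :: 'a set) = p"
  by (simp add: P_eq card_image[OF inj_of_nat])

lemma of_nat_in_P: "(of_nat k :: 'a) \<in> prime_subfield"
  by (auto simp: prime_subfield_def intro!: image_eqI[of _ _ "int k"])

lemma P_obtain: assumes "y \<in> (prime_subfield :: 'a set)" obtains k where "k < p" "y = of_nat k"
  using assms P_eq by auto

lemma P_pow: "y \<in> (prime_subfield :: 'a set) \<Longrightarrow> y ^ p = y"
  by (elim P_obtain) (simp add: of_nat_pow_p)

lemma P_iff: "(y :: 'a) \<in> prime_subfield \<longleftrightarrow> y ^ p = y"
proof
  assume "y ^ p = y"
  define Q :: "'a poly" where "Q = monom 1 p - [:0, 1:]"
  have cQ: "coeff Q p = 1" using p_gt1 by (simp add: Q_def coeff_pCons split: nat.splits)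
  hence Q0: "Q \<noteq> 0" by auto
  have dQ: "degree Q \<le> p"
    unfolding Q_def using p_gt1 by (intro degree_le) (auto simp: coeff_pCons split: nat.splits)
  have roots: "{x. poly Q x = 0} = {x. x ^ p = x}" by (auto simp: Q_def poly_monom)
  have "card {x::'a. x ^ p = x} \<le> p" using card_poly_roots_bound[OF Q0] dQ roots by simp
  moreover have "prime_subfield \<subseteq> {x::'a. x ^ p = x}" using P_pow by auto
  moreover have "card (prime_subfield :: 'a set) \<le> card {x::'a. x ^ p = x}"
    using P_pow by (intro card_mono) auto
  ultimately have "prime_subfield = {x::'a. x ^ p = x}"
    using card_P by (intro card_subset_eq) auto
  thus "y \<in> prime_subfield" using \<open>y ^ p = y\<close> by auto
qed (rule P_pow)

lemma P_add: "x \<in> prime_subfield \<Longrightarrow> y \<in> prime_subfield \<Longrightarrow> (x::'a) + y \<in> prime_subfield"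
  by (simp add: P_iff frob)

lemma P_uminus: "x \<in> prime_subfield \<Longrightarrow> - (x::'a) \<in> prime_subfield"
  by (simp add: P_iff frob_minus)

lemma P_diff: "x \<in> prime_subfield \<Longrightarrow> y \<in> prime_subfield \<Longrightarrow> (x::'a) - y \<in> prime_subfield"
  using P_add[of x "-y"] P_uminus[of y] by simp

lemma P_mult: "x \<in> prime_subfield \<Longrightarrow> y \<in> prime_subfield \<Longrightarrow> (x::'a) * y \<in> prime_subfield"
  by (simp add: P_iff power_mult_distrib)

lemma P_inverse: "x \<in> prime_subfield \<Longrightarrow> inverse (x::'a) \<in> prime_subfield"
  by (simp add: P_iff power_inverse)

lemma P_divide: "x \<in> prime_subfield \<Longrightarrow> y \<in> prime_subfield \<Longrightarrow> (x::'a) / y \<in> prime_subfield"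
  by (simp add: divide_inverse P_mult P_inverse)

lemma P_0: "(0::'a) \<in> prime_subfield" and P_1: "(1::'a) \<in> prime_subfield"
  using of_nat_in_P[of 0] of_nat_in_P[of 1] by simp_all

lemma P_pow_pi: "y \<in> (prime_subfield :: 'a set) \<Longrightarrow> y ^ (p ^ i) = y"
proof (induction i)
  case (Suc i) then show ?case by (simp add: power_mult P_pow mult.commute[of p])
qed simp

lemma fp_idx_of_nat: "fp_idx p (of_nat k :: 'a) = k mod p"
  unfolding fp_idx_def
proof (rule the_equality)
  show "k mod p < p \<and> (of_nat (k mod p) :: 'a) = of_nat k" using p_gt1 by (simp add: of_nat_eq_iff)
  fix k' assume "k' < p \<and> (of_nat k' :: 'a) = of_nat k"
  thus "k' = k mod p" by (metis of_nat_eq_iff mod_less)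
qed

lemma fp_idx_P: "y \<in> (prime_subfield :: 'a set) \<Longrightarrow> fp_idx p y < p \<and> of_nat (fp_idx p y) = y"
  by (elim P_obtain) (simp add: fp_idx_of_nat)

end



context ffp begin

lemma tr_add: "tr p e (x + y :: 'a) = tr p e x + tr p e y"
  by (simp add: tr_def frob_pow sum.distrib)

lemma tr_diff: "tr p e (x - y :: 'a) = tr p e x - tr p e y"
  using tr_add[of "x - y" y] by simp

lemma tr_smul: "c \<in> (prime_subfield :: 'a set) \<Longrightarrow> tr p e (c * x) = c * tr p e x"
  by (simp add: tr_def power_mult_distrib P_pow_pi sum_distrib_left)

lemma tr_in_P: "tr p e (x::'a) \<in> prime_subfield"
proof -
  define f where "f i = x ^ (p ^ i)" for i
  have "(tr p e x) ^ p = (\<Sum>i<e. f i ^ p)" by (simp add: tr_def frob_sum f_def)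
  also have "\<dots> = (\<Sum>i<e. f (Suc i))"
    by (simp add: f_def power_mult[symmetric] mult.commute)
  also have "\<dots> = (\<Sum>i<e. f i)"
  proof -
    have "f 0 + (\<Sum>i<e. f (Suc i)) = (\<Sum>i<e. f i) + f e"
      by (simp only: sum.lessThan_Suc_shift[symmetric] sum.lessThan_Suc)
    moreover have "f e = f 0" by (simp add: f_def pow_card)
    ultimately show ?thesis by (simp add: add.commute)
  qed
  also have "\<dots> = tr p e x" by (simp add: tr_def f_def)
  finally show ?thesis by (simp add: P_iff)
qed

lemma tr_nonzero: "\<exists>x::'a. tr p e x \<noteq> 0"
proof (rule ccontr)
  assume "\<not> (\<exists>x::'a. tr p e x \<noteq> 0)"
  hence all: "\<forall>x::'a. tr p e x = 0" by blast
  define T :: "'a poly" where "T = (\<Sum>i<e. monom 1 (p ^ i))"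
  have pT: "poly T x = tr p e x" for x by (simp add: T_def tr_def poly_sum poly_monom)
  have inj: "p ^ i = p ^ j \<longleftrightarrow> i = j" for i j using p_gt1 by simp
  have cT: "coeff T (p ^ (e - 1)) = 1"
  proof -
    have "coeff T (p ^ (e - 1)) = (\<Sum>i<e. if p ^ i = p ^ (e - 1) then 1 else 0)"
      by (simp add: T_def coeff_sum)
    also have "\<dots> = (\<Sum>i\<in>{e - 1}. 1)"
      using e by (intro sum.mono_neutral_cong_right) (auto simp: inj)
    finally show ?thesis by simp
  qed
  hence T0: "T \<noteq> 0" by auto
  have dT: "degree T \<le> p ^ (e - 1)"
  proof (rule degree_le, intro allI impI)
    fix n assume n: "p ^ (e - 1) < n"
    have "p ^ i \<noteq> n" if "i < e" for i
    proof -
      have "p ^ i \<le> p ^ (e - 1)" using that p_gt1 by (intro power_increasing) auto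
      thus ?thesis using n by auto
    qed
    thus "coeff T n = 0" by (simp add: T_def coeff_sum)
  qed
  have "UNIV = {x::'a. poly T x = 0}" using all pT by auto
  hence "card (UNIV :: 'a set) \<le> p ^ (e - 1)" using card_poly_roots_bound[OF T0] dT by simp
  moreover have "p ^ (e - 1) < p ^ e" using p_gt1 e by (intro power_strict_increasing) auto
  ultimately show False using card by simp
qed

lemma tr_fiber_card_eq:
  assumes s: "s \<in> (prime_subfield :: 'a set)"
  shows "card {x::'a. tr p e x = s} = card {x::'a. tr p e x = 0}"
proof -
  obtain x0 :: 'a where x0: "tr p e x0 \<noteq> 0" using tr_nonzero by blast
  define w where "w = (s / tr p e x0) * x0"
  have tw: "tr p e w = s" unfolding w_def
    using x0 by (subst tr_smul) (auto intro!: P_divide s tr_in_P)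
  have "bij_betw (\<lambda>x. x + w) {x::'a. tr p e x = 0} {x::'a. tr p e x = s}"
    by (rule bij_betw_byWitness[of _ "\<lambda>y. y - w"]) (auto simp: tr_add tr_diff tw)
  thus ?thesis by (simp add: bij_betw_same_card)
qed

lemma tr_fiber_card:
  assumes s: "s \<in> (prime_subfield :: 'a set)"
  shows "card {x::'a. tr p e x = s} = p ^ (e - 1)"
proof -
  define K where "K = card {x::'a. tr p e x = 0}"
  have U: "(\<Union>y\<in>(prime_subfield :: 'a set). {x::'a. tr p e x = y}) = UNIV"
    using tr_in_P by blast
  have "card (UNIV :: 'a set) = card (\<Union>y\<in>(prime_subfield :: 'a set). {x::'a. tr p e x = y})"
    by (simp only: U)
  also have "\<dots> = (\<Sum>y\<in>(prime_subfield :: 'a set). card {x::'a. tr p e x = y})"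
    by (rule card_UN_disjoint) auto
  also have "\<dots> = (\<Sum>y\<in>(prime_subfield :: 'a set). K)"
    by (intro sum.cong refl) (simp add: K_def tr_fiber_card_eq)
  also have "\<dots> = p * K" by (simp add: card_P)
  finally have "p ^ e = p * K" using card by simp
  hence "K = p ^ (e - 1)" using e p_gt1
    by (metis (no_types, lifting) Suc_diff_le diff_Suc_1 mult_cancel_left not_one_less_zero power_Suc zero_less_one_class.zero_le_one le_numeral_extra(2) gr_implies_not0)
  thus ?thesis using s by (simp add: K_def tr_fiber_card_eq)
qed

lemma tr_b_card:
  assumes b: "b \<noteq> 0" and s: "s \<in> (prime_subfield :: 'a set)"
  shows "card {x::'a. tr p e (b * x) = s} = p ^ (e - 1)"
proof -
  have "bij_betw (\<lambda>y. y / b) {y::'a. tr p e y = s} {x::'a. tr p e (b * x) = s}"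
    by (rule bij_betw_byWitness[of _ "\<lambda>x. b * x"]) (use b in auto)
  hence "card {x::'a. tr p e (b * x) = s} = card {y::'a. tr p e y = s}"
    by (simp add: bij_betw_same_card)
  thus ?thesis using tr_fiber_card[OF s] by simp
qed

end



definition zeta :: "nat \<Rightarrow> complex" where "zeta p = exp (2 * pi * \<i> / of_nat p)"

lemma zeta_pow_p: "p > 0 \<Longrightarrow> zeta p ^ p = 1"
proof -
  assume "p > 0"
  have "zeta p ^ p = exp (of_nat p * (2 * pi * \<i> / of_nat p))" unfolding zeta_def by (rule exp_of_nat_mult[symmetric])
  also have "\<dots> = exp (2 * pi * \<i>)" using \<open>p > 0\<close> by simp
  finally show ?thesis by (simp add: exp_two_pi_i)
qed

lemma zeta_ne_1: "p > 1 \<Longrightarrow> zeta p \<noteq> 1"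
proof
  assume p: "p > 1" and "zeta p = 1"
  then obtain n :: int where n: "Im (2 * pi * \<i> / of_nat p) = real_of_int (2 * n) * pi"
    unfolding zeta_def exp_eq_1 by blast
  have "Im (2 * pi * \<i> / of_nat p) = 2 * pi / real p" by (simp add: Im_divide_of_nat)
  with n have "2 * pi / real p = 2 * real_of_int n * pi" by simp
  hence "(2 * pi) * (1 / real p) = (2 * pi) * real_of_int n" by simp
  hence h: "1 / real p = real_of_int n" using pi_gt_zero by (subst (asm) mult_left_cancel) auto
  have "0 < 1 / real p" "1 / real p < 1" using p by auto
  hence "0 < real_of_int n" "real_of_int n < 1" using h by auto
  hence "0 < n" "n < 1" by simp_all
  thus False by linarith
qed

lemma zeta_power_mod: "p > 0 \<Longrightarrow> zeta p ^ (k mod p) = zeta p ^ k"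
proof -
  assume "p > 0"
  have "zeta p ^ k = zeta p ^ (p * (k div p) + k mod p)" by simp
  also have "\<dots> = (zeta p ^ p) ^ (k div p) * zeta p ^ (k mod p)" by (simp only: power_add power_mult)
  finally show ?thesis using zeta_pow_p[OF \<open>p > 0\<close>] by simp
qed

locale ffo = ffp +
  assumes oddp: "odd p"
begin

lemma p_gt2: "p > 2"
proof -
  have "p \<noteq> 2" using oddp by auto
  thus ?thesis using p_gt1 by simp
qed

lemma zeta_pow_of_nat: "zeta_pow p (of_nat k :: 'a) = zeta p ^ k"
proof -
  have "zeta p ^ (k mod p) = exp (of_nat (k mod p) * (2 * pi * \<i> / of_nat p))"
    unfolding zeta_def by (rule exp_of_nat_mult[symmetric])
  also have "\<dots> = zeta_pow p (of_nat k :: 'a)"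
    unfolding zeta_pow_def fp_idx_of_nat by (rule arg_cong[where f=exp]) (simp add: field_simps)
  finally show ?thesis using p_gt1 by (simp add: zeta_power_mod)
qed

lemma chi_add: "x \<in> (prime_subfield :: 'a set) \<Longrightarrow> y \<in> prime_subfield \<Longrightarrow>
    zeta_pow p (x + y) = zeta_pow p x * zeta_pow p y"
  by (elim P_obtain) (simp add: zeta_pow_of_nat power_add flip: of_nat_add)

lemma chi_0: "zeta_pow p (0::'a) = 1"
  using zeta_pow_of_nat[of 0] by simp

lemma sum_P: "(\<Sum>y\<in>(prime_subfield :: 'a set). g y) = (\<Sum>k<p. g (of_nat k))"
  by (simp add: P_eq sum.reindex[OF inj_of_nat])

lemma chi_sum: assumes c: "c \<in> (prime_subfield :: 'a set)"
  shows "(\<Sum>y\<in>(prime_subfield :: 'a set). zeta_pow p (c * y)) = (if c = 0 then of_nat p else 0)"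
proof (cases "c = 0")
  case True then show ?thesis by (simp add: chi_0 card_P)
next
  case False
  have "(\<Sum>y\<in>(prime_subfield :: 'a set). zeta_pow p (c * y)) = (\<Sum>y\<in>(prime_subfield :: 'a set). zeta_pow p y)"
    by (rule sum.reindex_bij_witness[of _ "\<lambda>y. y / c" "\<lambda>y. c * y"]) (use False c in \<open>auto intro: P_mult P_divide\<close>)
  also have "\<dots> = (\<Sum>k<p. zeta p ^ k)" by (simp add: sum_P zeta_pow_of_nat)
  also have "\<dots> = 0" using zeta_ne_1[OF p_gt1] zeta_pow_p p_gt1 by (simp add: sum_gp_strict)
  finally show ?thesis using False by simp
qed

definition hk where "hk = (p - 1) div 2"

lemma eta_field: assumes y: "y \<in> (prime_subfield :: 'a set)"
  shows "(of_int (eta0 p y) :: 'a) = y ^ hk"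
proof -
  obtain k where k: "k < p" "y = of_nat k" using y by (elim P_obtain)
  have "[Legendre (int k) (int p) = int k ^ ((p - 1) div 2)] (mod int p)"
    using euler_criterion[OF p p_gt2] by blast
  hence "Legendre (int k) (int p) mod int p = int k ^ ((p - 1) div 2) mod int p"
    by (simp add: Cong.cong_def)
  hence "(of_int (Legendre (int k) (int p)) :: 'a) = of_int (int k ^ ((p - 1) div 2))"
    by (simp only: of_int_eq_iff)
  thus ?thesis using k by (simp add: eta0_def fp_idx_of_nat hk_def)
qed

lemma eta_range: "eta0 p (y::'a) \<in> {-1, 0, 1}"
  by (simp add: eta0_def Legendre_def)

lemma of_int_inj3: assumes "a \<in> {-1, 0, 1::int}" "b \<in> {-1, 0, 1::int}" "(of_int a :: 'a) = of_int b"
  shows "a = b"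
proof (rule ccontr)
  assume ab: "a \<noteq> b"
  have "(of_int (a - b) :: 'a) = of_int 0" using assms(3) by simp
  hence "a mod int p = b mod int p" using assms(3) by (simp add: of_int_eq_iff)
  hence "int p dvd (a - b)" by (simp add: mod_eq_dvd_iff)
  hence "\<bar>int p\<bar> \<le> \<bar>a - b\<bar>" using ab by (intro dvd_imp_le_int) auto
  moreover have "\<bar>a - b\<bar> \<le> 2" using assms(1,2) by auto
  ultimately show False using p_gt2 by simp
qed

lemma eta0_0: "eta0 p (0::'a) = 0"
  using fp_idx_of_nat[of 0] by (simp add: eta0_def Legendre_def)

lemma eta_mult: assumes "x \<in> (prime_subfield :: 'a set)" "y \<in> prime_subfield"
  shows "eta0 p (x * y) = eta0 p x * eta0 p y"
proof (rule of_int_inj3)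
  show "eta0 p (x * y) \<in> {-1, 0, 1}" by (rule eta_range)
  show "eta0 p x * eta0 p y \<in> {-1, 0, 1}" using eta_range[of x] eta_range[of y] by auto
  show "(of_int (eta0 p (x * y)) :: 'a) = of_int (eta0 p x * eta0 p y)"
    using assms by (simp add: eta_field P_mult power_mult_distrib)
qed

lemma eta_nz: assumes "x \<in> (prime_subfield :: 'a set)" "x \<noteq> 0"
  shows "eta0 p x \<in> {-1, 1}"
proof -
  have "(of_int (eta0 p x) :: 'a) \<noteq> 0" using assms by (simp add: eta_field)
  hence "eta0 p x \<noteq> 0" by auto
  thus ?thesis using eta_range[of x] by auto
qed

lemma eta_sq: assumes "x \<in> (prime_subfield :: 'a set)" "x \<noteq> 0"
  shows "eta0 p x * eta0 p x = 1"
  using eta_nz[OF assms] by auto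

lemma eta_m1: "eta0 p (-1 :: 'a) = (-1) ^ hk"
proof (rule of_int_inj3)
  show "eta0 p (-1 :: 'a) \<in> {-1, 0, 1}" by (rule eta_range)
  show "((-1) ^ hk :: int) \<in> {-1, 0, 1}" by (cases "even hk") auto
  show "(of_int (eta0 p (-1 :: 'a)) :: 'a) = of_int ((-1) ^ hk)"
    using P_uminus[OF P_1] by (simp add: eta_field)
qed

lemma eta_nonres: "\<exists>g\<in>(prime_subfield :: 'a set). g \<noteq> 0 \<and> eta0 p g = -1"
proof -
  have hk1: "hk \<ge> 1" using p_gt2 by (simp add: hk_def)
  define Q :: "'a poly" where "Q = monom 1 hk - 1"
  have cQ: "coeff Q hk = 1" using hk1 by (simp add: Q_def coeff_1)
  hence Q0: "Q \<noteq> 0" by auto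
  have dQ: "degree Q \<le> hk"
    unfolding Q_def using hk1 by (intro degree_le) (auto simp: coeff_1)
  have roots: "{x. poly Q x = 0} = {x. x ^ hk = 1}" by (auto simp: Q_def poly_monom)
  have c1: "card {x::'a. x ^ hk = 1} \<le> hk" using card_poly_roots_bound[OF Q0] dQ roots by simp
  have c2: "card ((prime_subfield :: 'a set) - {0}) = p - 1" using card_P P_0 by (simp add: card_Diff_singleton)
  have "hk < p - 1" using p_gt2 by (simp add: hk_def)
  hence "\<not> ((prime_subfield :: 'a set) - {0} \<subseteq> {x::'a. x ^ hk = 1})"
    using c1 c2 card_mono[of "{x::'a. x ^ hk = 1}" "prime_subfield - {0}"] by auto
  then obtain g where g: "g \<in> (prime_subfield :: 'a set)" "g \<noteq> 0" "g ^ hk \<noteq> 1" by auto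
  have "eta0 p g \<noteq> 1"
  proof
    assume "eta0 p g = 1"
    hence "(of_int (eta0 p g) :: 'a) = 1" by simp
    thus False using g eta_field by simp
  qed
  thus ?thesis using eta_nz[OF g(1,2)] g by auto
qed

lemma eta_sum: "(\<Sum>y\<in>(prime_subfield :: 'a set). eta0 p y) = 0"
proof -
  obtain g where g: "g \<in> (prime_subfield :: 'a set)" "g \<noteq> 0" "eta0 p g = -1" using eta_nonres by blast
  define S where "S = (\<Sum>y\<in>(prime_subfield :: 'a set). eta0 p y)"
  have "S = (\<Sum>y\<in>(prime_subfield :: 'a set). eta0 p (g * y))" unfolding S_def
    by (rule sum.reindex_bij_witness[of _ "\<lambda>y. g * y" "\<lambda>y. y / g"]) (use g in \<open>auto intro: P_mult P_divide\<close>)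
  also have "\<dots> = (\<Sum>y\<in>(prime_subfield :: 'a set). - eta0 p y)"
    by (intro sum.cong refl) (simp add: eta_mult g)
  also have "\<dots> = - S" by (simp add: S_def sum_negf)
  finally show ?thesis unfolding S_def by simp
qed

end



context ffo begin

abbreviation PS where "PS \<equiv> (prime_subfield :: 'a set)"

lemma gauss_P: "gauss_sum p TYPE('a) = (\<Sum>y\<in>PS. of_int (eta0 p y) * zeta_pow p y)"
  unfolding gauss_sum_def by (rule sum.mono_neutral_left) (auto simp: eta0_0)

lemma chi_mult_sum: assumes c: "c \<in> PS"
  shows "(\<Sum>x\<in>PS - {0}. zeta_pow p (c * x)) = (if c = 0 then of_nat p else 0) - 1"
proof -
  have "(\<Sum>x\<in>PS. zeta_pow p (c * x)) = zeta_pow p (c * 0) + (\<Sum>x\<in>PS - {0}. zeta_pow p (c * x))"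
    using P_0 by (simp add: sum.remove)
  thus ?thesis using chi_sum[OF c] by (simp add: chi_0)
qed

lemma gauss_sq: "(gauss_sum p TYPE('a)) ^ 2 = of_int ((-1) ^ hk * int p)"
proof -
  define G where "G = gauss_sum p TYPE('a)"
  define et where "et y = (of_int (eta0 p y) :: complex)" for y :: 'a
  define ch where "ch y = zeta_pow p y" for y :: 'a
  have G1: "G = (\<Sum>x\<in>PS - {0}. et x * ch x)" by (simp add: G_def gauss_sum_def et_def ch_def)
  have G2: "G = (\<Sum>y\<in>PS. et y * ch y)" by (simp add: G_def gauss_P et_def ch_def)
  have inner: "et x * ch x * G = (\<Sum>t\<in>PS. et t * ch ((1 + t) * x))" if x: "x \<in> PS - {0}" for x
  proof -
    have xP: "x \<in> PS" and x0: "x \<noteq> 0" using x by auto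
    have "G = (\<Sum>t\<in>PS. et (x * t) * ch (x * t))" unfolding G2
      by (rule sum.reindex_bij_witness[of _ "\<lambda>y. x * y" "\<lambda>y. y / x"]) (use xP x0 in \<open>auto intro: P_mult P_divide\<close>)
    hence "et x * ch x * G = (\<Sum>t\<in>PS. et x * et (x * t) * (ch x * ch (x * t)))"
      by (simp add: sum_distrib_left mult_ac)
    also have "\<dots> = (\<Sum>t\<in>PS. et t * ch ((1 + t) * x))"
    proof (intro sum.cong refl)
      fix t assume t: "t \<in> PS"
      have "eta0 p x * eta0 p (x * t) = eta0 p t"
        using eta_mult[OF xP t] eta_sq[OF xP x0] by (simp add: mult.assoc[symmetric])
      hence e: "et x * et (x * t) = et t" unfolding et_def by (metis of_int_mult)
      have c: "ch x * ch (x * t) = ch ((1 + t) * x)"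
        unfolding ch_def using chi_add[OF xP P_mult[OF xP t]] by (simp add: algebra_simps)
      show "et x * et (x * t) * (ch x * ch (x * t)) = et t * ch ((1 + t) * x)" by (simp only: e c)
    qed
    finally show ?thesis .
  qed
  have "G ^ 2 = (\<Sum>x\<in>PS - {0}. et x * ch x * G)"
    by (simp add: power2_eq_square G1[symmetric] sum_distrib_right[symmetric] flip: G1)
  also have "\<dots> = (\<Sum>x\<in>PS - {0}. \<Sum>t\<in>PS. et t * ch ((1 + t) * x))"
    by (intro sum.cong refl inner)
  also have "\<dots> = (\<Sum>t\<in>PS. et t * (\<Sum>x\<in>PS - {0}. ch ((1 + t) * x)))"
    by (simp add: sum.swap[of _ "PS - {0}"] sum_distrib_left)
  also have "\<dots> = (\<Sum>t\<in>PS. et t * ((if 1 + t = 0 then of_nat p else 0) - 1))"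
    by (intro sum.cong refl) (simp add: ch_def chi_mult_sum P_add P_1)
  also have "\<dots> = (\<Sum>t\<in>PS. (if t = -1 then et t * of_nat p else 0) - et t)"
  proof (intro sum.cong refl)
    fix t :: 'a
    have "1 + t = 0 \<longleftrightarrow> t = -1" by (simp add: eq_neg_iff_add_eq_0 add.commute)
    thus "et t * ((if 1 + t = 0 then of_nat p else 0) - 1) = (if t = -1 then et t * of_nat p else 0) - et t"
      by (simp add: right_diff_distrib)
  qed
  also have "\<dots> = (\<Sum>t\<in>PS. (if t = -1 then et t * of_nat p else 0)) - (\<Sum>t\<in>PS. et t)"
    by (simp only: sum_subtractf)
  also have "(\<Sum>t\<in>PS. (if t = -1 then et t * of_nat p else 0)) = et (-1) * of_nat p"
    using P_uminus[OF P_1] by (simp add: sum.delta)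
  also have "(\<Sum>t\<in>PS. et t) = 0"
    unfolding et_def using eta_sum by (metis of_int_0 of_int_sum)
  finally show ?thesis by (simp add: G_def et_def eta_m1)
qed

lemma sqrt_pstar_sq: "sqrt_pstar p ^ 2 = of_int ((-1) ^ hk * int p)"
proof (cases "p mod 4 = 1")
  case True
  hence "even hk" unfolding hk_def by presburger
  thus ?thesis using True by (simp add: sqrt_pstar_def power_mult_distrib flip: of_real_power)
next
  case False
  hence "odd hk" unfolding hk_def using oddp by presburger
  thus ?thesis using False by (simp add: sqrt_pstar_def power_mult_distrib flip: of_real_power)
qed

end



context ffo begin

lemma group_sum: fixes F :: "'a \<Rightarrow> 'a" assumes F: "\<forall>x. F x \<in> PS"
  shows "(\<Sum>x\<in>(UNIV :: 'a set). zeta_pow p (F x)) = (\<Sum>j\<in>PS. of_nat (card {x. F x = j}) * zeta_pow p j)"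
proof -
  have U: "(\<Union>j\<in>PS. {x. F x = j}) = UNIV" using F by blast
  have "(\<Sum>x\<in>(UNIV :: 'a set). zeta_pow p (F x)) = (\<Sum>x\<in>(\<Union>j\<in>PS. {x. F x = j}). zeta_pow p (F x))"
    by (simp only: U)
  also have "\<dots> = (\<Sum>j\<in>PS. \<Sum>x\<in>{x. F x = j}. zeta_pow p (F x))"
    by (rule sum.UNION_disjoint) auto
  also have "\<dots> = (\<Sum>j\<in>PS. of_nat (card {x. F x = j}) * zeta_pow p j)"
    by (intro sum.cong refl) simp
  finally show ?thesis .
qed

lemma group_card: fixes F :: "'a \<Rightarrow> 'a" assumes F: "\<forall>x. F x \<in> PS"
  shows "(\<Sum>j\<in>PS. card {x. F x = j}) = p ^ e"
proof -
  have U: "(\<Union>j\<in>PS. {x. F x = j}) = UNIV" using F by blast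
  have "card (UNIV :: 'a set) = card (\<Union>j\<in>PS. {x. F x = j})" by (simp only: U)
  also have "\<dots> = (\<Sum>j\<in>PS. card {x. F x = j})" by (rule card_UN_disjoint) auto
  finally show ?thesis using card by simp
qed

lemma lin_indep_P: assumes "(\<Sum>j\<in>PS. of_int (m j) * zeta_pow p j) = 0"
  shows "\<forall>j\<in>PS. m j = m 0"
proof -
  have "(\<Sum>k<p. of_int (m (of_nat k)) * zeta p ^ k) = 0"
    using assms by (simp add: sum_P zeta_pow_of_nat)
  hence h: "\<forall>k<p. m (of_nat k) = m (of_nat 0)"
    using lin_indep[OF p zeta_pow_p zeta_ne_1[OF p_gt1], of "\<lambda>k. m (of_nat k)"] p_gt1 by simp
  show ?thesis
  proof
    fix j assume "j \<in> PS"
    then obtain k where "k < p" "j = of_nat k" by (elim P_obtain)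
    thus "m j = m 0" using h by simp
  qed
qed

lemma sum_const_P: "(\<Sum>j\<in>PS. (c::int)) = int p * c"
  by (simp add: card_P)

lemma count_even:
  fixes F :: "'a \<Rightarrow> 'a" and eps :: int
  assumes F: "\<forall>x. F x \<in> PS" and fs: "fs \<in> PS" and t: "t \<in> PS" and ev: "even e"
    and walsh: "(\<Sum>x\<in>(UNIV :: 'a set). zeta_pow p (F x)) = of_int eps * sqrt_pstar p ^ e * zeta_pow p fs"
  shows "of_nat (card {x. F x = t}) =
           (if t = fs then of_nat (p ^ (e - 1)) + of_int eps * sqrt_pstar p ^ e * (of_nat p - 1) / of_nat p
            else of_nat (p ^ (e - 1)) - of_int eps * sqrt_pstar p ^ e / of_nat p)"
proof -
  define n where "n j = card {x. F x = j}" for j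
  define Wi where "Wi = eps * ((-1) ^ hk * int p) ^ (e div 2)"
  have "sqrt_pstar p ^ e = (sqrt_pstar p ^ 2) ^ (e div 2)"
    using ev by (simp flip: power_mult)
  hence W: "of_int eps * sqrt_pstar p ^ e = (of_int Wi :: complex)"
    by (simp add: Wi_def sqrt_pstar_sq)
  define m where "m j = int (n j) - (if j = fs then Wi else 0)" for j
  have "(\<Sum>j\<in>PS. of_int (m j) * zeta_pow p j) =
        (\<Sum>j\<in>PS. of_nat (n j) * zeta_pow p j) - (\<Sum>j\<in>PS. (if j = fs then of_int Wi * zeta_pow p j else 0))"
  proof -
    have "of_int (m j) * zeta_pow p j = of_nat (n j) * zeta_pow p j - (if j = fs then of_int Wi * zeta_pow p j else 0)" for j
      by (simp add: m_def left_diff_distrib)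
    hence "(\<Sum>j\<in>PS. of_int (m j) * zeta_pow p j) = (\<Sum>j\<in>PS. of_nat (n j) * zeta_pow p j - (if j = fs then of_int Wi * zeta_pow p j else 0))"
      by simp
    thus ?thesis by (simp only: sum_subtractf)
  qed
  also have "\<dots> = 0"
    using group_sum[OF F] walsh W fs by (simp add: n_def)
  finally have "\<forall>j\<in>PS. m j = m 0" by (rule lin_indep_P)
  hence mc: "m j = m 0" if "j \<in> PS" for j using that by blast
  have "(\<Sum>j\<in>PS. m j) = int (\<Sum>j\<in>PS. n j) - Wi"
    using fs by (simp add: m_def sum_subtractf of_nat_sum)
  also have "(\<Sum>j\<in>PS. n j) = p ^ e" using group_card[OF F] by (simp add: n_def)
  finally have s1: "(\<Sum>j\<in>PS. m j) = int p ^ e - Wi" by simp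
  have "(\<Sum>j\<in>PS. m j) = (\<Sum>j\<in>PS. m 0)" by (rule sum.cong) (auto intro: mc)
  hence "(\<Sum>j\<in>PS. m j) = int p * m 0" by (simp add: card_P)
  with s1 have C0: "int p * m 0 = int p ^ e - Wi" by simp
  have C: "of_int (m 0) = ((of_nat p * of_nat (p ^ (e - 1)) - of_int Wi) / of_nat p :: complex)"
  proof -
    have "(of_int (int p * m 0) :: complex) = of_int (int p ^ e - Wi)" using C0 by simp
    hence "of_nat p * of_int (m 0) = (of_nat p ^ e - of_int Wi :: complex)" by simp
    moreover have "(of_nat p ^ e :: complex) = of_nat p * of_nat (p ^ (e - 1))"
      using e by (metis Suc_diff_le diff_Suc_1 of_nat_power power_Suc)
    ultimately show ?thesis using p_gt1 by (simp add: field_simps)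
  qed
  have nt: "of_nat (n t) = (of_int (m 0) + (if t = fs then of_int Wi else 0) :: complex)"
  proof -
    have "int (n t) = m 0 + (if t = fs then Wi else 0)" using mc[OF t] by (simp add: m_def)
    hence "(of_int (int (n t)) :: complex) = of_int (m 0 + (if t = fs then Wi else 0))" by simp
    thus ?thesis by simp
  qed
  have fin: "nt = (if t = fs then q + W * (P - 1) / P else q - W / P)"
    if "nt = m0 + (if t = fs then W else 0)" "m0 = (P * q - W) / P" "P = of_nat p" for nt m0 q W P :: complex
    using that p_gt1 by (auto simp: field_simps)
  show ?thesis unfolding W n_def[symmetric]
    by (rule fin[OF nt C refl])
qed

end



context ffo begin

lemma sqrt_pstar_gauss: "\<exists>\<sigma>::int. \<sigma> \<in> {1, -1} \<and> sqrt_pstar p = of_int \<sigma> * gauss_sum p TYPE('a)"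
proof -
  define G where "G = gauss_sum p TYPE('a)"
  have "sqrt_pstar p ^ 2 = G ^ 2" by (simp add: G_def gauss_sq sqrt_pstar_sq)
  moreover have "(sqrt_pstar p - G) * (sqrt_pstar p + G) = sqrt_pstar p ^ 2 - G ^ 2"
    by (simp only: power2_eq_square square_diff_square_factored mult.commute[of "sqrt_pstar p - G"])
  ultimately have "(sqrt_pstar p - G) * (sqrt_pstar p + G) = 0" by simp
  hence "sqrt_pstar p - G = 0 \<or> sqrt_pstar p + G = 0" by (simp only: mult_eq_0_iff)
  hence "sqrt_pstar p = G \<or> sqrt_pstar p = - G" by (simp add: eq_neg_iff_add_eq_0)
  thus ?thesis
  proof
    assume "sqrt_pstar p = G" thus ?thesis by (intro exI[of _ 1]) (simp add: G_def)
  next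
    assume "sqrt_pstar p = - G" thus ?thesis by (intro exI[of _ "-1"]) (simp add: G_def)
  qed
qed

lemma eta_shift_sum: assumes fs: "fs \<in> PS"
  shows "(\<Sum>y\<in>PS. g (y + fs)) = (\<Sum>z\<in>PS. g z)"
  by (rule sum.reindex_bij_witness[of _ "\<lambda>z. z - fs" "\<lambda>y. y + fs"]) (use fs in \<open>auto intro: P_add P_diff\<close>)

lemma count_odd:
  fixes F :: "'a \<Rightarrow> 'a" and eps :: int
  assumes F: "\<forall>x. F x \<in> PS" and fs: "fs \<in> PS" and t: "t \<in> PS" and od: "odd e"
    and walsh: "(\<Sum>x\<in>(UNIV :: 'a set). zeta_pow p (F x)) = of_int eps * sqrt_pstar p ^ e * zeta_pow p fs"
  shows "of_nat (card {x. F x = t}) =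
           of_nat (p ^ (e - 1)) + of_int (eta0 p (fs - t)) * (of_int eps * sqrt_pstar p ^ e * gauss_sum p TYPE('a) / of_nat p)"
proof -
  define n where "n j = card {x. F x = j}" for j
  define G where "G = gauss_sum p TYPE('a)"
  define pst where "pst = (-1) ^ hk * int p"
  obtain \<sigma> :: int where \<sigma>: "\<sigma> \<in> {1, -1}" "sqrt_pstar p = of_int \<sigma> * G"
    using sqrt_pstar_gauss unfolding G_def by blast
  define K where "K = eps * \<sigma> * pst ^ (e div 2)"
  have "sqrt_pstar p ^ e = (sqrt_pstar p ^ 2) ^ (e div 2) * sqrt_pstar p"
    using od by (simp flip: power_mult power_Suc2)
  also have "\<dots> = of_int (pst ^ (e div 2)) * sqrt_pstar p" by (simp add: sqrt_pstar_sq pst_def)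
  finally have "sqrt_pstar p ^ e = of_int (pst ^ (e div 2)) * (of_int \<sigma> * G)" by (simp only: \<sigma>(2))
  hence W: "of_int eps * sqrt_pstar p ^ e = of_int K * G"
    by (simp add: K_def mult_ac)
  have G2: "G * G = of_int pst" using gauss_sq by (simp add: G_def pst_def power2_eq_square)
  have WG: "of_int eps * sqrt_pstar p ^ e * G / of_nat p = of_int (K * (-1) ^ hk)"
    using p_gt1 by (simp add: W mult.assoc G2 pst_def)
  have Gshift: "G * zeta_pow p fs = (\<Sum>z\<in>PS. of_int (eta0 p (z - fs)) * zeta_pow p z)"
  proof -
    have "G * zeta_pow p fs = (\<Sum>y\<in>PS. of_int (eta0 p y) * zeta_pow p y * zeta_pow p fs)"
      by (simp only: G_def gauss_P sum_distrib_right)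
    also have "\<dots> = (\<Sum>y\<in>PS. of_int (eta0 p y) * zeta_pow p (y + fs))"
    proof (rule sum.cong[OF refl])
      fix y assume "y \<in> PS"
      thus "of_int (eta0 p y) * zeta_pow p y * zeta_pow p fs = of_int (eta0 p y) * zeta_pow p (y + fs)"
        using chi_add[OF _ fs] by (simp add: mult.assoc)
    qed
    also have "\<dots> = (\<Sum>y\<in>PS. of_int (eta0 p ((y + fs) - fs)) * zeta_pow p (y + fs))" by simp
    also have "\<dots> = (\<Sum>z\<in>PS. of_int (eta0 p (z - fs)) * zeta_pow p z)"
      by (rule eta_shift_sum[OF fs, where g="\<lambda>z. of_int (eta0 p (z - fs)) * zeta_pow p z"])
    finally show ?thesis .
  qed
  define m where "m j = int (n j) - K * eta0 p (j - fs)" for j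
  have "(\<Sum>j\<in>PS. of_int (m j) * zeta_pow p j) =
        (\<Sum>j\<in>PS. of_nat (n j) * zeta_pow p j - of_int K * (of_int (eta0 p (j - fs)) * zeta_pow p j))"
    by (intro sum.cong refl) (simp add: m_def left_diff_distrib mult.assoc)
  also have "\<dots> = (\<Sum>j\<in>PS. of_nat (n j) * zeta_pow p j) - of_int K * (G * zeta_pow p fs)"
    by (simp only: sum_subtractf Gshift sum_distrib_left)
  also have "\<dots> = 0"
    using group_sum[OF F] walsh W by (simp add: n_def mult.assoc)
  finally have "\<forall>j\<in>PS. m j = m 0" by (rule lin_indep_P)
  hence mc: "m j = m 0" if "j \<in> PS" for j using that by blast
  have es: "(\<Sum>j\<in>PS. eta0 p (j - fs)) = 0"
    using eta_shift_sum[OF fs, where g="\<lambda>z. eta0 p (z - fs)"] eta_sum by simp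
  have "(\<Sum>j\<in>PS. m j) = int (\<Sum>j\<in>PS. n j) - K * (\<Sum>j\<in>PS. eta0 p (j - fs))"
    by (simp add: m_def sum_subtractf of_nat_sum sum_distrib_left)
  also have "(\<Sum>j\<in>PS. n j) = p ^ e" using group_card[OF F] by (simp add: n_def)
  finally have s1: "(\<Sum>j\<in>PS. m j) = int p ^ e" using es by simp
  have "(\<Sum>j\<in>PS. m j) = (\<Sum>j\<in>PS. m 0)" by (rule sum.cong) (auto intro: mc)
  hence "(\<Sum>j\<in>PS. m j) = int p * m 0" by (simp add: card_P)
  with s1 have "int p * m 0 = int p * int p ^ (e - 1)"
    using e by (metis Suc_diff_le diff_Suc_1 power_Suc)
  hence C: "m 0 = int p ^ (e - 1)" using p_gt1 by simp
  have em: "eta0 p (t - fs) = (-1) ^ hk * eta0 p (fs - t)"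
  proof -
    have "t - fs = (-1) * (fs - t)" by simp
    hence "eta0 p (t - fs) = eta0 p (-1::'a) * eta0 p (fs - t)"
      using eta_mult[OF P_uminus[OF P_1] P_diff[OF fs t]] by simp
    thus ?thesis by (simp add: eta_m1)
  qed
  have "int (n t) = int p ^ (e - 1) + K * eta0 p (t - fs)" using mc[OF t] C by (simp add: m_def)
  hence "int (n t) = int (p ^ (e - 1)) + eta0 p (fs - t) * (K * (-1) ^ hk)" by (simp add: em mult_ac)
  hence "(of_int (int (n t)) :: complex) = of_int (int (p ^ (e - 1)) + eta0 p (fs - t) * (K * (-1) ^ hk))"
    by (simp only:)
  hence "(of_nat (n t) :: complex) = of_nat (p ^ (e - 1)) + of_int (eta0 p (fs - t)) * of_int (K * (-1) ^ hk)"
    by (simp only: of_int_add of_int_mult of_int_of_nat_eq)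
  thus ?thesis unfolding n_def[symmetric] G_def[symmetric] WG .
qed

end



lemma tr_zero: "p > 0 \<Longrightarrow> tr p e (0::'a::field) = 0"
  by (simp add: tr_def power_0_left)

theorem lemma4p1:
  fixes p e :: nat and f fstar :: "'a::{field,finite} \<Rightarrow> 'a" and eps :: int
    and s a b :: 'a
  assumes "prime p" and "odd p" and "e \<ge> 1" and "CARD('a) = p ^ e"
    and "s \<in> prime_subfield" and "s \<noteq> 0" and "a \<in> prime_subfield"
    and "in_RF p e f eps fstar"
  shows "let N = of_nat (num_sol p e f a b s) :: complex;
             q = of_nat (p ^ (e - 1)) :: complex;
             W = of_int eps * sqrt_pstar p ^ e;
             G = gauss_sum p TYPE('a);
             c = fstar (- b / a) - inverse a * s
         in (even e \<longrightarrow>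
               (a = 0 \<and> b = 0 \<longrightarrow> N = 0) \<and>
               (a = 0 \<and> b \<noteq> 0 \<longrightarrow> N = q) \<and>
               (a \<noteq> 0 \<and> c = 0 \<longrightarrow> N = q + W * (of_nat p - 1) / of_nat p) \<and>
               (a \<noteq> 0 \<and> c \<noteq> 0 \<longrightarrow> N = q - W / of_nat p)) \<and>
            (odd e \<longrightarrow>
               (a = 0 \<and> b = 0 \<longrightarrow> N = 0) \<and>
               (a = 0 \<and> b \<noteq> 0 \<longrightarrow> N = q) \<and>
               (a \<noteq> 0 \<and> c = 0 \<longrightarrow> N = q) \<and>
               (a \<noteq> 0 \<and> c \<noteq> 0 \<and> eta0 p c = 1 \<longrightarrow> N = q + W * G / of_nat p) \<and>
               (a \<noteq> 0 \<and> c \<noteq> 0 \<and> eta0 p c = -1 \<longrightarrow> N = q - W * G / of_nat p))"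
proof -
  note A = assms
  interpret ffo p e "TYPE('a)"
    by unfold_locales (use A in auto)
  have wrb: "weakly_regular_bent p e f eps fstar" using A(8) by (simp add: in_RF_def)
  hence fP: "\<forall>x. f x \<in> PS" and fsP: "\<forall>x. fstar x \<in> PS"
    and walsh: "\<And>\<beta>. (\<Sum>x\<in>UNIV. zeta_pow p (f x - tr p e (\<beta> * x))) = of_int eps * sqrt_pstar p ^ e * zeta_pow p (fstar \<beta>)"
    by (auto simp: weakly_regular_bent_def)
  define N where "N = (of_nat (num_sol p e f a b s) :: complex)"
  define q where "q = (of_nat (p ^ (e - 1)) :: complex)"
  define W where "W = of_int eps * sqrt_pstar p ^ e"
  define G where "G = gauss_sum p TYPE('a)"
  define c where "c = fstar (- b / a) - inverse a * s"
  have h00: "N = 0" if "a = 0" "b = 0"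
  proof -
    have "{x. a * f x + tr p e (b * x) = s} = {}" using that A(6) p_gt1 by (auto simp: tr_zero)
    thus ?thesis by (simp add: N_def num_sol_def)
  qed
  have h0b: "N = q" if "a = 0" "b \<noteq> 0"
  proof -
    have "{x. a * f x + tr p e (b * x) = s} = {x. tr p e (b * x) = s}" using that by simp
    thus ?thesis using tr_b_card[OF that(2) A(5)] by (simp add: N_def q_def num_sol_def)
  qed
  define \<beta> where "\<beta> = - b / a"
  define F where "F x = f x - tr p e (\<beta> * x)" for x
  define t where "t = inverse a * s"
  have FP: "\<forall>x. F x \<in> PS" using fP by (auto simp: F_def intro: P_diff tr_in_P)
  have fsb: "fstar \<beta> \<in> PS" using fsP by blast
  have tP: "t \<in> PS" using A(5,7) by (simp add: t_def P_mult P_inverse)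
  have wF: "(\<Sum>x\<in>UNIV. zeta_pow p (F x)) = of_int eps * sqrt_pstar p ^ e * zeta_pow p (fstar \<beta>)"
    unfolding F_def by (rule walsh)
  have Neq: "N = of_nat (card {x. F x = t})" if a0: "a \<noteq> 0"
  proof -
    have "{x. a * f x + tr p e (b * x) = s} = {x. F x = t}"
    proof (intro Collect_cong)
      fix x
      have "b * x = (- a) * (\<beta> * x)" using a0 by (simp add: \<beta>_def)
      hence "tr p e (b * x) = - a * tr p e (\<beta> * x)"
        using tr_smul[OF P_uminus[OF A(7)]] by simp
      hence "a * f x + tr p e (b * x) = a * F x" by (simp add: F_def algebra_simps)
      also have "a * F x = s \<longleftrightarrow> F x = t" using a0 by (auto simp: t_def field_simps)
      finally show "a * f x + tr p e (b * x) = s \<longleftrightarrow> F x = t"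
        by (metis (no_types) \<open>a * f x + tr p e (b * x) = a * F x\<close> \<open>(a * F x = s) = (F x = t)\<close>)
    qed
    thus ?thesis by (simp add: N_def num_sol_def)
  qed
  have cdef: "c = fstar \<beta> - t" by (simp add: c_def \<beta>_def t_def)
  have hev: "N = (if t = fstar \<beta> then q + W * (of_nat p - 1) / of_nat p else q - W / of_nat p)"
    if "a \<noteq> 0" "even e"
    using Neq[OF that(1)] count_even[OF FP fsb tP that(2) wF] by (simp add: q_def W_def)
  have hod: "N = q + of_int (eta0 p c) * (W * G / of_nat p)"
    if "a \<noteq> 0" "odd e"
    using Neq[OF that(1)] count_odd[OF FP fsb tP that(2) wF] by (simp add: q_def W_def G_def cdef)
  have c0: "c = 0 \<longleftrightarrow> t = fstar \<beta>" by (auto simp: cdef)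
  have e00: "eta0 p c = 0" if "c = 0" using that by (simp add: eta0_0)
  show ?thesis
    unfolding Let_def N_def[symmetric] q_def[symmetric] W_def[symmetric] G_def[symmetric] c_def[symmetric]
    using h00 h0b hev hod c0 e00 by auto
qed


end
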